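(* (1) If $G$ is a finite $2$-group with a cyclic subgroup of index $4$, then $G''\leq Z(G)$. (2) If $G$ is a finite group of order $2^{\alpha}3^{\beta}$ (with $\alpha,\beta\ge 0$) having a cyclic subgroup of index less than $6$, then $G''\leq Z(G)$.
   Context: $G''=[G',G']$ is the second derived subgroup and $Z(G)$ is the center of $G$. *)

theory Defs
  imports "HOL-Algebra.Algebra"
begin

definition center :: "('a, 'b) monoid_scheme \<Rightarrow> 'a set" where
  "center G = {z \<in> carrier G. \<forall>x \<in> carrier G. z \<otimes>\<^bsub>G\<^esub> x = x \<otimes>\<^bsub>G\<^esub> z}"

definition second_derived :: "('a, 'b) monoid_scheme \<Rightarrow> 'a set" where
  "second_derived G = derived G (derived G (carrier G))"

end

theory Submission
  imports Defs
begin


definition Sk :: "nat \<Rightarrow> nat list list" where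
  "Sk k = filter distinct (List.n_lists k [0..<k])"
definition lcomp :: "nat list \<Rightarrow> nat list \<Rightarrow> nat list" where
  "lcomp p q = map (nth p) q"
definition lid :: "nat \<Rightarrow> nat list" where "lid k = [0..<k]"
definition linv :: "nat list \<Rightarrow> nat list" where
  "linv p = map (\<lambda>i. case find (\<lambda>j. p!j = i) [0..<length p] of Some j \<Rightarrow> j | None \<Rightarrow> 0) [0..<length p]"
definition hasfix :: "nat list \<Rightarrow> bool" where
  "hasfix p = (\<exists>i\<in>set [0..<length p]. p!i = i)"
definition nmov :: "nat list \<Rightarrow> nat" where
  "nmov p = length (filter (\<lambda>i. p!i \<noteq> i) [0..<length p])"
definition pcomm :: "nat list \<Rightarrow> nat list \<Rightarrow> nat list" where
  "pcomm p q = lcomp (lcomp (lcomp p q) (linv p)) (linv q)"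
definition viol :: "nat list \<Rightarrow> nat list \<Rightarrow> bool" where
  "viol a b = ((\<exists>i\<in>set [0..<length a]. a!i=i \<and> b!i=i) \<and> lcomp a b \<noteq> lcomp b a)"
definition V4 :: "nat list list" where "V4 = [[0,1,2,3],[1,0,3,2],[2,3,0,1],[3,2,1,0]]"
definition A3 :: "nat list list" where "A3 = [[0,1,2],[1,2,0],[2,0,1]]"
definition Qok :: "nat \<Rightarrow> nat list list \<Rightarrow> bool" where
  "Qok k Q = (lid k \<in> set Q \<and> (\<forall>a\<in>set Q. \<forall>b\<in>set Q. lcomp a b \<in> set Q \<and> pcomm a b = lid k)
     \<and> (\<forall>a\<in>set Q. linv a \<in> set Q))"

datatype wd = WX | WY | Cm wd wd | Iv wd
fun ev :: "wd \<Rightarrow> nat list \<Rightarrow> nat list \<Rightarrow> nat list" where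
  "ev WX p q = p" | "ev WY p q = q" | "ev (Cm a b) p q = lcomp (ev a p q) (ev b p q)"
| "ev (Iv a) p q = linv (ev a p q)"

definition WE :: "(wd \<times> wd) list" where
 "WE = [(Cm WX WY, Cm (Cm WX WX) (Iv WY)), (WX, Cm (Cm WY WX) (Iv WY)), (WY, Cm (Cm WX WY) (Iv WX)), (Cm WX (Iv WY), Cm (Iv WX) WY)]"
definition WG :: "(wd \<times> wd) list" where
 "WG = [(WX, Cm (Iv WX) WY), (Iv WX, Cm WX WY)]"
definition WT :: "wd list" where
 "WT = [WX, WY, Cm WX WY, Cm (Cm WX WX) (Iv WY)]"

lemma FE: "\<forall>p\<in>set (Sk 4). \<forall>q\<in>set (Sk 4). pcomm p q \<in> set V4 \<or> (\<exists>(w1,w2)\<in>set WE. viol (ev w1 p q) (ev w2 p q))"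
  by code_simp
lemma FG: "\<forall>r\<in>set (Sk 4). \<forall>p\<in>set (Sk 4). nmov r = 3 \<longrightarrow> hasfix p \<or>
   (\<exists>(w1,w2)\<in>set WG. hasfix (ev w1 r p) \<and> hasfix (ev w2 r p) \<and> p = lcomp (ev w1 r p) (ev w2 r p))"
  by code_simp
lemma FD: "\<forall>p\<in>set (Sk 4). \<forall>q\<in>set (Sk 4). pcomm p q = lid 4 \<or> nmov p = 3 \<or> nmov q = 3 \<or>
   (\<exists>w\<in>set WT. nmov (ev w p q) = 2 \<and> nmov (lcomp (pcomm p q) (ev w p q)) = 2)"
  by code_simp
lemma FT: "\<forall>c\<in>set V4. \<forall>c'\<in>set V4. \<forall>t\<in>set (Sk 4). \<forall>t'\<in>set (Sk 4). c \<noteq> c' \<longrightarrow> c \<noteq> lid 4 \<longrightarrow> c' \<noteq> lid 4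
   \<longrightarrow> nmov t = 2 \<longrightarrow> nmov t' = 2 \<longrightarrow> nmov (lcomp c t) = 2 \<longrightarrow> nmov (lcomp c' t') = 2 \<longrightarrow> nmov (lcomp t t') = 3"
  by code_simp
lemma FZ: "\<forall>c\<in>set V4. \<forall>t\<in>set (Sk 4). nmov t = 2 \<longrightarrow> lcomp (lcomp c t) t = c"
  by code_simp
lemma FZ2: "\<forall>c\<in>set V4. lcomp c c = lid 4" by code_simp
lemma FH4: "\<forall>t\<in>set (Sk 4). nmov t = 2 \<longrightarrow> hasfix t" by code_simp
lemma FQ4: "Qok 4 V4" by code_simp
lemma FG3: "\<forall>t\<in>set (Sk 3). \<forall>p\<in>set (Sk 3). nmov t = 2 \<longrightarrow> hasfix p \<or>
   (hasfix t \<and> hasfix (lcomp (linv t) p) \<and> p = lcomp t (lcomp (linv t) p))" by code_simp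
lemma FA3: "\<forall>p\<in>set (Sk 3). \<forall>q\<in>set (Sk 3). pcomm p q \<in> set A3" by code_simp
lemma FQ3: "Qok 3 A3" by code_simp
lemma FN3: "\<forall>p\<in>set (Sk 3). \<forall>q\<in>set (Sk 3). pcomm p q = lid 3 \<or> nmov p = 2 \<or> nmov q = 2" by code_simp
lemma F2: "\<forall>p\<in>set (Sk 2). \<forall>q\<in>set (Sk 2). pcomm p q = lid 2" by code_simp
lemma F1: "\<forall>p\<in>set (Sk 1). \<forall>q\<in>set (Sk 1). pcomm p q = lid 1" by code_simp
lemma FU: "\<forall>k\<in>{1,2,3,4::nat}. \<forall>p\<in>set (Sk k). \<forall>q\<in>set (Sk k). lcomp p q = lid k \<longrightarrow> q = linv p" by code_simp
lemma FL: "\<forall>k\<in>{1,2,3,4::nat}. \<forall>p\<in>set (Sk k). lcomp p (linv p) = lid k" by code_simp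

lemma FUk: assumes "k \<in> {1,2,3,4}" "p \<in> set (Sk k)" "q \<in> set (Sk k)" "lcomp p q = lid k"
  shows "q = linv p"
  using bspec[OF bspec[OF bspec[OF FU assms(1)] assms(2)] assms(3)] assms(4) by (rule mp)
lemma FLk: assumes "k \<in> {1,2,3,4}" "p \<in> set (Sk k)" shows "lcomp p (linv p) = lid k"
  using bspec[OF bspec[OF FL assms(1)] assms(2)] .



lemma Sk_iff: "p \<in> set (Sk k) \<longleftrightarrow> length p = k \<and> set p \<subseteq> {0..<k} \<and> distinct p"
  by (auto simp: Sk_def set_n_lists)

lemma lcomp_lid_left: "set p \<subseteq> {0..<k} \<Longrightarrow> lcomp (lid k) p = p"
  unfolding lcomp_def lid_def by (rule map_idI) auto

lemma lcomp_lid_right: "length p = k \<Longrightarrow> lcomp p (lid k) = p"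
  unfolding lcomp_def lid_def by (metis map_nth)

lemma hasfix_lid: "0 < k \<Longrightarrow> hasfix (lid k)"
  unfolding hasfix_def lid_def by force

definition good :: "nat list set \<Rightarrow> nat list \<Rightarrow> bool" where
  "good P p = (\<exists>a\<in>P. \<exists>b\<in>P. hasfix a \<and> hasfix b \<and> p = lcomp a b)"

definition CONC :: "nat list set \<Rightarrow> nat \<Rightarrow> bool" where
  "CONC P k = (((\<forall>p\<in>P. good P p) \<and> (\<exists>Q. Qok k Q \<and> (\<forall>p\<in>P. \<forall>q\<in>P. pcomm p q \<in> set Q)))
     \<or> (\<exists>z\<in>P. good P z \<and> lcomp z z = lid k \<and> (\<forall>p\<in>P. \<forall>q\<in>P. pcomm p q = lid k \<or> pcomm p q = z)))"

lemma comb: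
  assumes k: "k \<in> {1,2,3,4}" and PS: "P \<subseteq> set (Sk k)" and ne: "P \<noteq> {}"
    and cl: "\<And>p q. p \<in> P \<Longrightarrow> q \<in> P \<Longrightarrow> lcomp p q \<in> P"
    and cli: "\<And>p. p \<in> P \<Longrightarrow> linv p \<in> P"
    and AS: "\<And>p q. p \<in> P \<Longrightarrow> q \<in> P \<Longrightarrow> \<not> viol p q"
  shows "CONC P k"
proof -
  have evP: "ev w p q \<in> P" if "p \<in> P" "q \<in> P" for w p q
    using that by (induction w) (auto intro: cl cli)
  have pcP: "pcomm p q \<in> P" if "p \<in> P" "q \<in> P" for p q
    using that unfolding pcomm_def by (intro cl cli)
  have Sk: "p \<in> set (Sk k)" if "p \<in> P" for p using PS that by blast
  obtain p1 where p1: "p1 \<in> P" using ne by blast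
  have lidP: "lid k \<in> P"
    using cl[OF p1 cli[OF p1]] unfolding FLk[OF k Sk[OF p1]] .
  have k0: "0 < k" using k by auto
  have lenk: "length p = k" if "p \<in> P" for p using Sk[OF that] Sk_iff by blast
  have goodfix: "good P p" if "p \<in> P" "hasfix p" for p
    unfolding good_def using that lidP hasfix_lid[OF k0] lcomp_lid_right[OF lenk[OF that(1)]] by metis
  have goodlid: "good P (lid k)"
    using goodfix[OF lidP hasfix_lid[OF k0]] .
  have lidlid: "lcomp (lid k) (lid k) = lid k"
    using lcomp_lid_right[OF lenk[OF lidP]] .
  have triv: "CONC P k" if "\<forall>p\<in>P. \<forall>q\<in>P. pcomm p q = lid k"
    unfolding CONC_def using that lidP goodlid lidlid by blast
  consider "k = 1" | "k = 2" | "k = 3" | "k = 4" using k by auto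
  then show ?thesis
  proof cases
    case 1 then show ?thesis using triv F1 Sk by blast
  next
    case 2 then show ?thesis using triv F2 Sk by blast
  next
    case 3
    show ?thesis
    proof (cases "\<exists>t\<in>P. nmov t = 2")
      case True
      then obtain t where t: "t \<in> P" "nmov t = 2" by blast
      have "good P p" if p: "p \<in> P" for p
      proof -
        have "hasfix p \<or> (hasfix t \<and> hasfix (lcomp (linv t) p) \<and> p = lcomp t (lcomp (linv t) p))"
          using FG3 Sk[OF t(1)] Sk[OF p] t(2) 3 by blast
        then show ?thesis
          using goodfix[OF p] t(1) cl[OF cli[OF t(1)] p] unfolding good_def by blast
      qed
      moreover have "Qok k A3 \<and> (\<forall>p\<in>P. \<forall>q\<in>P. pcomm p q \<in> set A3)"
        using FQ3 FA3 Sk 3 by blast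
      ultimately show ?thesis unfolding CONC_def by blast
    next
      case False
      then show ?thesis using triv FN3 Sk 3 by blast
    qed
  next
    case 4
    have E: "pcomm p q \<in> set V4" if "p \<in> P" "q \<in> P" for p q
    proof -
      have "pcomm p q \<in> set V4 \<or> (\<exists>(w1,w2)\<in>set WE. viol (ev w1 p q) (ev w2 p q))"
        using FE Sk that 4 by blast
      then show ?thesis using AS evP that by blast
    qed
    show ?thesis
    proof (cases "\<exists>r\<in>P. nmov r = 3")
      case True
      then obtain r where r: "r \<in> P" "nmov r = 3" by blast
      have "good P p" if p: "p \<in> P" for p
      proof -
        have "hasfix p \<or> (\<exists>(w1,w2)\<in>set WG. hasfix (ev w1 r p) \<and> hasfix (ev w2 r p) \<and> p = lcomp (ev w1 r p) (ev w2 r p))"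
          using FG Sk[OF r(1)] Sk[OF p] r(2) 4 by blast
        then show ?thesis
          using goodfix[OF p] evP[OF r(1) p] unfolding good_def by blast
      qed
      moreover have "Qok k V4 \<and> (\<forall>p\<in>P. \<forall>q\<in>P. pcomm p q \<in> set V4)"
        using FQ4 E 4 by blast
      ultimately show ?thesis unfolding CONC_def by blast
    next
      case no3: False
      show ?thesis
      proof (cases "\<forall>p\<in>P. \<forall>q\<in>P. pcomm p q = lid k")
        case True then show ?thesis using triv by blast
      next
        case False
        then obtain p0 q0 where pq0: "p0 \<in> P" "q0 \<in> P" "pcomm p0 q0 \<noteq> lid 4" using 4 by blast
        define c0 where "c0 = pcomm p0 q0"
        have c0P: "c0 \<in> P" using pcP pq0 c0_def by blast
        have c0V: "c0 \<in> set V4" using E pq0 c0_def by blast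
        have trw: "\<exists>t\<in>P. nmov t = 2 \<and> nmov (lcomp (pcomm p q) t) = 2"
          if "p \<in> P" "q \<in> P" "pcomm p q \<noteq> lid 4" for p q
        proof -
          have "pcomm p q = lid 4 \<or> nmov p = 3 \<or> nmov q = 3 \<or>
             (\<exists>w\<in>set WT. nmov (ev w p q) = 2 \<and> nmov (lcomp (pcomm p q) (ev w p q)) = 2)"
            using FD Sk that 4 by blast
          then show ?thesis using that no3 evP by blast
        qed
        obtain t0 where t0: "t0 \<in> P" "nmov t0 = 2" "nmov (lcomp c0 t0) = 2"
          using trw[OF pq0] c0_def by blast
        have "good P c0"
        proof -
          have "c0 = lcomp (lcomp c0 t0) t0" using FZ c0V Sk[OF t0(1)] t0(2) 4 by auto
          moreover have "hasfix t0" "hasfix (lcomp c0 t0)"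
            using FH4 Sk[OF t0(1)] Sk[OF cl[OF c0P t0(1)]] t0 4 by auto
          ultimately show ?thesis unfolding good_def using cl[OF c0P t0(1)] t0(1) by blast
        qed
        moreover have "lcomp c0 c0 = lid k" using FZ2 c0V 4 by blast
        moreover have "pcomm p q = lid k \<or> pcomm p q = c0" if pq: "p \<in> P" "q \<in> P" for p q
        proof (rule ccontr)
          assume "\<not> ?thesis"
          then have ne1: "pcomm p q \<noteq> lid 4" "pcomm p q \<noteq> c0" using 4 by auto
          obtain t' where t': "t' \<in> P" "nmov t' = 2" "nmov (lcomp (pcomm p q) t') = 2"
            using trw[OF pq ne1(1)] by blast
          have "nmov (lcomp t0 t') = 3"
            apply (rule FT[rule_format, of c0 "pcomm p q" t0 t'])
            using c0V E[OF pq] Sk[OF t0(1)] Sk[OF t'(1)] t0 t' ne1 pq0(3) c0_def 4 by auto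
          then show False using no3 cl[OF t0(1) t'(1)] by blast
        qed
        ultimately show ?thesis unfolding CONC_def using c0P by blast
      qed
    qed
  qed
qed



lemma (in group) comm_prod:
  assumes "a \<in> carrier G" "b \<in> carrier G" "y \<in> carrier G" "y \<otimes> a = a \<otimes> y" "y \<otimes> b = b \<otimes> y"
  shows "y \<otimes> (a \<otimes> b) = (a \<otimes> b) \<otimes> y"
proof -
  have "y \<otimes> (a \<otimes> b) = (y \<otimes> a) \<otimes> b" using assms(1-3) by (simp add: m_assoc)
  also have "\<dots> = (a \<otimes> y) \<otimes> b" using assms(4) by simp
  also have "\<dots> = a \<otimes> (y \<otimes> b)" using assms(1-3) by (simp add: m_assoc)
  also have "\<dots> = a \<otimes> (b \<otimes> y)" using assms(5) by simp
  also have "\<dots> = (a \<otimes> b) \<otimes> y" using assms(1-3) by (simp add: m_assoc)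
  finally show ?thesis .
qed

lemma (in group) comm_commutator:
  assumes "u \<in> carrier G" "v \<in> carrier G" "u \<otimes> v = v \<otimes> u"
  shows "u \<otimes> v \<otimes> inv u \<otimes> inv v = \<one>"
proof -
  have "u \<otimes> v \<otimes> inv u \<otimes> inv v = v \<otimes> u \<otimes> inv u \<otimes> inv v" using assms by simp
  also have "\<dots> = \<one>" using assms by (simp add: m_assoc)
  finally show ?thesis .
qed

lemma (in group) inv_l_assoc: "r \<in> carrier G \<Longrightarrow> x \<in> carrier G \<Longrightarrow> inv r \<otimes> (r \<otimes> x) = x"
  by (simp add: m_assoc[symmetric])

locale cact = group G for G (structure) +
  fixes A :: "'a set" and k :: nat and f :: "nat \<Rightarrow> 'a set"
  assumes A: "subgroup A G" and Acomm: "\<And>a b. a \<in> A \<Longrightarrow> b \<in> A \<Longrightarrow> a \<otimes> b = b \<otimes> a"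
  and fbij: "bij_betw f {0..<k} (rcosets A)"
begin

definition idx :: "'a set \<Rightarrow> nat" where "idx C = the_inv_into {0..<k} f C"
definition psi :: "'a \<Rightarrow> nat list" where "psi g = map (\<lambda>i. idx (f i #> inv g)) [0..<k]"

lemma Asub: "A \<subseteq> carrier G" using A subgroup.subset by blast

lemma rc_closed: assumes "C \<in> rcosets A" "g \<in> carrier G" shows "C #> g \<in> rcosets A"
proof -
  obtain r where r: "r \<in> carrier G" "C = A #> r" using assms(1) unfolding RCOSETS_def by blast
  have "C #> g = A #> (r \<otimes> g)" using r assms(2) Asub coset_mult_assoc by simp
  then show ?thesis using r assms(2) Asub rcosetsI by simp
qed

lemma f_in: "i < k \<Longrightarrow> f i \<in> rcosets A"
  using fbij bij_betw_apply by fastforce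

lemma f_sub: "i < k \<Longrightarrow> f i \<subseteq> carrier G"
  using f_in subgroup.rcosets_carrier[OF A] is_group by blast

lemma idx_lt: "C \<in> rcosets A \<Longrightarrow> idx C < k"
  unfolding idx_def using fbij the_inv_into_into[of f "{0..<k}" C "{0..<k}"]
  by (auto simp: bij_betw_def)

lemma f_idx: "C \<in> rcosets A \<Longrightarrow> f (idx C) = C"
  unfolding idx_def using fbij f_the_inv_into_f_bij_betw by metis

lemma idx_f: "i < k \<Longrightarrow> idx (f i) = i"
  unfolding idx_def using fbij the_inv_into_f_f by (fastforce simp: bij_betw_def)

lemma length_psi [simp]: "length (psi g) = k" by (simp add: psi_def)

lemma psi_nth: "i < k \<Longrightarrow> psi g ! i = idx (f i #> inv g)" by (simp add: psi_def)

lemma psi_lt: "i < k \<Longrightarrow> g \<in> carrier G \<Longrightarrow> psi g ! i < k"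
  using psi_nth idx_lt rc_closed f_in by simp

lemma psi_mult: assumes "g \<in> carrier G" "h \<in> carrier G" shows "psi (g \<otimes> h) = lcomp (psi g) (psi h)"
proof (rule nth_equalityI)
  show "length (psi (g \<otimes> h)) = length (lcomp (psi g) (psi h))" by (simp add: lcomp_def)
  fix i assume "i < length (psi (g \<otimes> h))"
  then have i: "i < k" by simp
  define j where "j = psi h ! i"
  have j: "j < k" using psi_lt[OF i assms(2)] j_def by simp
  have fj: "f j = f i #> inv h" unfolding j_def psi_nth[OF i]
    by (rule f_idx) (use rc_closed f_in i assms in auto)
  have "psi (g \<otimes> h) ! i = idx (f i #> (inv h \<otimes> inv g))"
    using psi_nth[OF i] assms inv_mult_group by simp
  also have "\<dots> = idx ((f i #> inv h) #> inv g)"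
    using coset_mult_assoc f_sub[OF i] assms by simp
  also have "\<dots> = psi g ! j" using psi_nth[OF j] fj by simp
  finally show "psi (g \<otimes> h) ! i = lcomp (psi g) (psi h) ! i"
    by (simp add: lcomp_def j_def i)
qed

lemma psi_one: "psi \<one> = lid k"
  by (rule nth_equalityI) (auto simp: lid_def psi_nth f_sub idx_f)

lemma psi_Sk: assumes g: "g \<in> carrier G" shows "psi g \<in> set (Sk k)"
proof -
  have "set (psi g) \<subseteq> {0..<k}" using psi_lt[OF _ g] by (auto simp: in_set_conv_nth)
  moreover have "inj_on (\<lambda>i. idx (f i #> inv g)) {0..<k}"
  proof (rule inj_onI)
    fix i j assume ij: "i \<in> {0..<k}" "j \<in> {0..<k}" "idx (f i #> inv g) = idx (f j #> inv g)"
    then have "f i #> inv g = f j #> inv g"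
      using f_idx rc_closed f_in g by (metis atLeastLessThan_iff inv_closed)
    then have "(f i #> inv g) #> g = (f j #> inv g) #> g" by simp
    then have "f i = f j" using ij f_sub coset_mult_assoc g by simp
    then show "i = j" using fbij ij by (auto simp: bij_betw_def inj_on_def)
  qed
  then have "distinct (psi g)" by (simp add: psi_def distinct_map)
  ultimately show ?thesis by (simp add: Sk_iff)
qed

lemma fix_conj:
  assumes i: "i < k" and g: "g \<in> carrier G" and fx: "psi g ! i = i"
    and r: "r \<in> carrier G" "f i = A #> r"
  shows "r \<otimes> inv g \<otimes> inv r \<in> A"
proof -
  have "f i #> inv g = f i"
    using fx psi_nth[OF i] f_idx rc_closed f_in i g by (metis inv_closed)
  then have e: "A #> (r \<otimes> inv g) = A #> r" using r coset_mult_assoc Asub g by simp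
  have "r \<otimes> inv g \<in> A #> (r \<otimes> inv g)" using rcos_self A r g by simp
  then have "r \<otimes> inv g \<in> A #> r" using e by simp
  then show ?thesis using subgroup.rcos_module_imp[OF A is_group r(1)] by simp
qed

lemma AS_grp:
  assumes i: "i < k" and g: "g \<in> carrier G" and h: "h \<in> carrier G"
    and fg: "psi g ! i = i" and fh: "psi h ! i = i"
  shows "g \<otimes> h = h \<otimes> g"
proof -
  obtain r where r: "r \<in> carrier G" "f i = A #> r" using f_in[OF i] unfolding RCOSETS_def by blast
  have a: "r \<otimes> inv g \<otimes> inv r \<in> A" using fix_conj[OF i g fg r] .
  have b: "r \<otimes> inv h \<otimes> inv r \<in> A" using fix_conj[OF i h fh r] .
  have gi: "inv g \<in> carrier G" and hi: "inv h \<in> carrier G" and ri: "inv r \<in> carrier G" using g h r by auto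
  have e: "(r \<otimes> inv g \<otimes> inv r) \<otimes> (r \<otimes> inv h \<otimes> inv r) = (r \<otimes> inv h \<otimes> inv r) \<otimes> (r \<otimes> inv g \<otimes> inv r)"
    using Acomm[OF a b] .
  have l: "(r \<otimes> inv g \<otimes> inv r) \<otimes> (r \<otimes> inv h \<otimes> inv r) = r \<otimes> (inv g \<otimes> inv h) \<otimes> inv r"
    using r(1) gi hi ri by (simp add: m_assoc inv_l_assoc)
  have rr: "(r \<otimes> inv h \<otimes> inv r) \<otimes> (r \<otimes> inv g \<otimes> inv r) = r \<otimes> (inv h \<otimes> inv g) \<otimes> inv r"
    using r(1) gi hi ri by (simp add: m_assoc inv_l_assoc)
  have e2: "r \<otimes> (inv g \<otimes> inv h) \<otimes> inv r = r \<otimes> (inv h \<otimes> inv g) \<otimes> inv r" using e l rr by simp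
  have c1: "r \<otimes> (inv g \<otimes> inv h) \<in> carrier G" "r \<otimes> (inv h \<otimes> inv g) \<in> carrier G"
    using r(1) gi hi by auto
  have e3: "r \<otimes> (inv g \<otimes> inv h) = r \<otimes> (inv h \<otimes> inv g)"
    using right_cancel[OF ri c1(1) c1(2)] e2 by blast
  have "inv r \<otimes> (r \<otimes> (inv g \<otimes> inv h)) = inv r \<otimes> (r \<otimes> (inv h \<otimes> inv g))" using e3 by simp
  then have e4: "inv g \<otimes> inv h = inv h \<otimes> inv g"
    using inv_l_assoc[OF r(1), of "inv g \<otimes> inv h"] inv_l_assoc[OF r(1), of "inv h \<otimes> inv g"] gi hi by simp
  have "inv (inv g \<otimes> inv h) = inv (inv h \<otimes> inv g)" using e4 by simp
  then show ?thesis using g h by (simp add: inv_mult_group)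
qed

lemma psi_inv: assumes k: "k \<in> {1,2,3,4}" and g: "g \<in> carrier G" shows "psi (inv g) = linv (psi g)"
proof -
  have "lcomp (psi g) (psi (inv g)) = lid k" using psi_mult[OF g inv_closed[OF g]] g psi_one by simp
  then show ?thesis by (rule FUk[OF k psi_Sk[OF g] psi_Sk[OF inv_closed[OF g]]])
qed

lemma psi_comm: assumes k: "k \<in> {1,2,3,4}" and g: "g \<in> carrier G" and h: "h \<in> carrier G"
  shows "psi (g \<otimes> h \<otimes> inv g \<otimes> inv h) = pcomm (psi g) (psi h)"
  using psi_mult psi_inv[OF k] g h by (simp add: pcomm_def)

lemma ker_comm: assumes y: "y \<in> carrier G" "psi y = lid k" and x: "x \<in> carrier G" "hasfix (psi x)"
  shows "y \<otimes> x = x \<otimes> y"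
proof -
  obtain i where i: "i < k" "psi x ! i = i" using x(2) unfolding hasfix_def by auto
  have "psi y ! i = i" using y(2) i by (simp add: lid_def)
  then show ?thesis using AS_grp[OF i(1) y(1) x(1)] i by simp
qed

lemma center_sub: "subgroup (center G) G"
proof (rule subgroupI)
  show "center G \<subseteq> carrier G" by (auto simp: center_def)
  show "center G \<noteq> {}" by (auto simp: center_def)
next
  fix a assume a: "a \<in> center G"
  then have ac: "a \<in> carrier G" by (simp add: center_def)
  show "inv a \<in> center G" unfolding center_def
  proof (intro CollectI conjI ballI)
    show "inv a \<in> carrier G" using ac by simp
    fix x assume x: "x \<in> carrier G"
    have "a \<otimes> x = x \<otimes> a" using a x by (simp add: center_def)
    then have e: "inv a \<otimes> (a \<otimes> x) \<otimes> inv a = inv a \<otimes> (x \<otimes> a) \<otimes> inv a" by simp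
    have "inv a \<otimes> (a \<otimes> x) \<otimes> inv a = x \<otimes> inv a" using ac x by (simp add: m_assoc[symmetric])
    moreover have "inv a \<otimes> (x \<otimes> a) \<otimes> inv a = inv a \<otimes> x" using ac x by (simp add: m_assoc)
    ultimately show "inv a \<otimes> x = x \<otimes> inv a" using e by simp
  qed
next
  fix a b assume ab: "a \<in> center G" "b \<in> center G"
  then have ac: "a \<in> carrier G" and bc: "b \<in> carrier G" by (auto simp: center_def)
  show "a \<otimes> b \<in> center G" unfolding center_def
  proof (intro CollectI conjI ballI)
    show "a \<otimes> b \<in> carrier G" using ac bc by simp
    fix x assume x: "x \<in> carrier G"
    have xa: "x \<otimes> a = a \<otimes> x" using ab(1) x by (simp add: center_def)
    have xb: "x \<otimes> b = b \<otimes> x" using ab(2) x by (simp add: center_def)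
    have "x \<otimes> (a \<otimes> b) = (a \<otimes> b) \<otimes> x" by (rule comm_prod[OF ac bc x xa xb])
    then show "a \<otimes> b \<otimes> x = x \<otimes> (a \<otimes> b)" by (rule sym)
  qed
qed

lemma main:
  assumes k: "k \<in> {1,2,3,4}"
  shows "second_derived G \<subseteq> center G"
proof -
  define P where "P = psi ` carrier G"
  have k0: "0 < k" using k by auto
  have "CONC P k"
  proof (rule comb[OF k])
    show "P \<subseteq> set (Sk k)" using psi_Sk P_def by auto
    show "P \<noteq> {}" using P_def by auto
    show "lcomp p q \<in> P" if pq: "p \<in> P" "q \<in> P" for p q
    proof -
      obtain g h where gh: "g \<in> carrier G" "h \<in> carrier G" "p = psi g" "q = psi h" using pq P_def by auto
      have "lcomp p q = psi (g \<otimes> h)" using psi_mult[OF gh(1,2)] gh(3,4) by simp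
      then show ?thesis using P_def gh(1,2) by simp
    qed
    show "linv p \<in> P" if pq: "p \<in> P" for p
    proof -
      obtain g where g: "g \<in> carrier G" "p = psi g" using pq P_def by auto
      have "linv p = psi (inv g)" using psi_inv[OF k g(1)] g(2) by simp
      then show ?thesis using P_def g(1) by simp
    qed
    show "\<not> viol p q" if pq: "p \<in> P" "q \<in> P" for p q
    proof
      assume v: "viol p q"
      obtain g h where gh: "g \<in> carrier G" "h \<in> carrier G" "p = psi g" "q = psi h"
        using pq P_def by auto
      obtain i where i: "i < k" "p ! i = i" "q ! i = i" "lcomp p q \<noteq> lcomp q p"
        using v gh unfolding viol_def by auto
      have "g \<otimes> h = h \<otimes> g" using AS_grp[OF i(1) gh(1) gh(2)] i gh by simp
      moreover have "lcomp p q = psi (g \<otimes> h)" using psi_mult[OF gh(1) gh(2)] gh by simp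
      moreover have "lcomp q p = psi (h \<otimes> g)" using psi_mult[OF gh(2) gh(1)] gh by simp
      ultimately show False using i(4) by simp
    qed
  qed
  have dd: "second_derived G \<subseteq> center G" if L: "subgroup L G" and d1: "derived_set G (carrier G) \<subseteq> L"
    and d2: "derived_set G L \<subseteq> center G" for L
  proof -
    have "derived G (carrier G) \<subseteq> L" unfolding derived_def using generate_subgroup_incl[OF d1 L] .
    then have "derived G (derived G (carrier G)) \<subseteq> derived G L" by (rule mono_derived)
    also have "\<dots> \<subseteq> center G" unfolding derived_def using generate_subgroup_incl[OF d2 center_sub] .
    finally show ?thesis unfolding second_derived_def .
  qed
  have lidSk: "lid k \<in> set (Sk k)" using psi_Sk psi_one by (metis one_closed)
  from \<open>CONC P k\<close> show ?thesis unfolding CONC_def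
  proof (elim disjE conjE exE bexE)
    fix Q assume allgood: "\<forall>p\<in>P. good P p" and Q: "Qok k Q" "\<forall>p\<in>P. \<forall>q\<in>P. pcomm p q \<in> set Q"
    have kc: "y \<in> center G" if y: "y \<in> carrier G" "psi y = lid k" for y
      unfolding center_def
    proof (intro CollectI conjI ballI)
      show "y \<in> carrier G" using y by simp
      fix x assume x: "x \<in> carrier G"
      obtain g1 g2 where g: "g1 \<in> carrier G" "g2 \<in> carrier G" "hasfix (psi g1)" "hasfix (psi g2)"
        "psi x = lcomp (psi g1) (psi g2)"
        using allgood x P_def unfolding good_def by auto
      have g12: "g1 \<otimes> g2 \<in> carrier G" using g by simp
      define w where "w = x \<otimes> inv (g1 \<otimes> g2)"
      have wc: "w \<in> carrier G" using w_def x g12 by simp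
      have p12: "psi (g1 \<otimes> g2) = psi x" using psi_mult[OF g(1) g(2)] g(5) by simp
      have "psi w = lcomp (psi x) (psi (inv (g1 \<otimes> g2)))"
        unfolding w_def by (rule psi_mult[OF x inv_closed[OF g12]])
      also have "psi (inv (g1 \<otimes> g2)) = linv (psi x)" using psi_inv[OF k g12] p12 by simp
      finally have "psi w = lcomp (psi x) (linv (psi x))" .
      then have pw: "psi w = lid k" using FLk[OF k psi_Sk[OF x]] by simp
      have xw: "x = w \<otimes> (g1 \<otimes> g2)" unfolding w_def using x g12 by (simp add: m_assoc)
      have c1: "y \<otimes> w = w \<otimes> y" using ker_comm[OF y wc] pw hasfix_lid[OF k0] by simp
      have c2: "y \<otimes> g1 = g1 \<otimes> y" using ker_comm[OF y g(1) g(3)] .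
      have c3: "y \<otimes> g2 = g2 \<otimes> y" using ker_comm[OF y g(2) g(4)] .
      show "y \<otimes> x = x \<otimes> y" unfolding xw
        using comm_prod[OF wc _ y(1) c1] comm_prod[OF g(1) g(2) y(1) c2 c3] g by simp
    qed
    define L where "L = {g \<in> carrier G. psi g \<in> set Q}"
    have L: "subgroup L G"
    proof (rule subgroupI)
      show "L \<subseteq> carrier G" using L_def by auto
      show "L \<noteq> {}" using L_def psi_one Q(1) unfolding Qok_def by (metis (mono_tags) empty_iff mem_Collect_eq one_closed)
      show "inv a \<in> L" if "a \<in> L" for a using that L_def psi_inv[OF k] Q(1) unfolding Qok_def by auto
      show "a \<otimes> b \<in> L" if "a \<in> L" "b \<in> L" for a b using that L_def psi_mult Q(1) unfolding Qok_def by auto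
    qed
    show ?thesis
    proof (rule dd[OF L])
      show "derived_set G (carrier G) \<subseteq> L"
      proof (intro subsetI, elim UN_E singletonE)
        fix h1 h2 c assume h: "h1 \<in> carrier G" "h2 \<in> carrier G" and c: "c = h1 \<otimes> h2 \<otimes> inv h1 \<otimes> inv h2"
        have "psi c = pcomm (psi h1) (psi h2)" using psi_comm[OF k h] c by simp
        moreover have "pcomm (psi h1) (psi h2) \<in> set Q" using Q(2) h P_def by blast
        moreover have "c \<in> carrier G" using c h by simp
        ultimately show "c \<in> L" using L_def by simp
      qed
      show "derived_set G L \<subseteq> center G"
      proof (intro subsetI, elim UN_E singletonE)
        fix u v c assume uv: "u \<in> L" "v \<in> L" and c: "c = u \<otimes> v \<otimes> inv u \<otimes> inv v"
        have uc: "u \<in> carrier G" "v \<in> carrier G" "psi u \<in> set Q" "psi v \<in> set Q" using uv L_def by auto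
        have "psi c = pcomm (psi u) (psi v)" using psi_comm[OF k uc(1,2)] c by simp
        also have "\<dots> = lid k" using Q(1) uc(3,4) unfolding Qok_def by blast
        finally have "psi c = lid k" .
        moreover have "c \<in> carrier G" using c uc by simp
        ultimately show "c \<in> center G" using kc by blast
      qed
    qed
  next
    fix z assume zP: "z \<in> P" and gz: "good P z" and zz: "lcomp z z = lid k"
      and pc: "\<forall>p\<in>P. \<forall>q\<in>P. pcomm p q = lid k \<or> pcomm p q = z"
    have zSk: "z \<in> set (Sk k)" using zP psi_Sk P_def by auto
    obtain g1 g2 where g: "g1 \<in> carrier G" "g2 \<in> carrier G" "hasfix (psi g1)" "hasfix (psi g2)"
        "z = lcomp (psi g1) (psi g2)"
      using gz P_def unfolding good_def by auto
    define t where "t = g1 \<otimes> g2"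
    have tc: "t \<in> carrier G" using t_def g by simp
    have pt: "psi t = z" using t_def g psi_mult by simp
    have linvz: "linv z = z" using FUk[OF k zSk zSk zz] by simp
    have ll: "lcomp (lid k) (lid k) = lid k" using lcomp_lid_right[of "lid k" k] by (simp add: lid_def)
    have linvid: "linv (lid k) = lid k" using FUk[OF k lidSk lidSk ll] by simp
    have zl: "lcomp z (lid k) = z" using lcomp_lid_right[of z k] zSk Sk_iff by blast
    have lz: "lcomp (lid k) z = z" using lcomp_lid_left[of z k] zSk Sk_iff by blast
    define L where "L = {g \<in> carrier G. psi g = lid k \<or> psi g = z}"
    have L: "subgroup L G"
    proof (rule subgroupI)
      show "L \<subseteq> carrier G" using L_def by auto
      have "\<one> \<in> L" using L_def psi_one by simp
      then show "L \<noteq> {}" by blast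
      show "inv a \<in> L" if a: "a \<in> L" for a
      proof -
        have ac: "a \<in> carrier G" "psi a = lid k \<or> psi a = z" using a L_def by auto
        have "psi (inv a) = linv (psi a)" by (rule psi_inv[OF k ac(1)])
        then have "psi (inv a) = lid k \<or> psi (inv a) = z" using ac(2) linvz linvid by auto
        then show ?thesis using L_def ac(1) by simp
      qed
      show "a \<otimes> b \<in> L" if "a \<in> L" "b \<in> L" for a b
      proof -
        have cl2: "lcomp x y = lid k \<or> lcomp x y = z" if "x = lid k \<or> x = z" "y = lid k \<or> y = z" for x y
          using that zz zl lz ll by auto
        have ab: "a \<in> carrier G" "b \<in> carrier G" using that L_def by auto
        have "psi (a \<otimes> b) = lcomp (psi a) (psi b)" using psi_mult[OF ab] .
        then show ?thesis using cl2[of "psi a" "psi b"] that ab L_def by auto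
      qed
    qed
    have kt: "y \<otimes> t = t \<otimes> y" if y: "y \<in> carrier G" "psi y = lid k" for y
      using comm_prod[OF g(1) g(2) y(1) ker_comm[OF y g(1) g(3)] ker_comm[OF y g(2) g(4)]] t_def by simp
    have kk: "y \<otimes> y' = y' \<otimes> y" if "y \<in> carrier G" "psi y = lid k" "y' \<in> carrier G" "psi y' = lid k" for y y'
      by (rule ker_comm[OF that(1,2) that(3)]) (simp add: that(4) hasfix_lid[OF k0])
    have decomp: "\<exists>w\<in>carrier G. psi w = lid k \<and> (u = w \<or> u = w \<otimes> t)" if u: "u \<in> L" for u
    proof (cases "psi u = lid k")
      case True then show ?thesis using u L_def by auto
    next
      case False
      then have pu: "psi u = z" using u L_def by auto
      define w where "w = u \<otimes> inv t"
      have uc: "u \<in> carrier G" using u L_def by auto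
      have "psi w = lcomp (psi u) (psi (inv t))" unfolding w_def by (rule psi_mult[OF uc inv_closed[OF tc]])
      also have "\<dots> = lcomp z z" using psi_inv[OF k tc] pu pt linvz by simp
      finally have "psi w = lid k" using zz by simp
      moreover have "u = w \<otimes> t" using w_def uc tc by (simp add: m_assoc)
      moreover have "w \<in> carrier G" using w_def uc tc by simp
      ultimately show ?thesis by blast
    qed
    have cw: "v \<otimes> w = w \<otimes> v" if v: "v \<in> L" and w: "w \<in> carrier G" "psi w = lid k" for v w
    proof -
      obtain w' where w': "w' \<in> carrier G" "psi w' = lid k" "v = w' \<or> v = w' \<otimes> t" using decomp[OF v] by blast
      from w'(3) have "w \<otimes> v = v \<otimes> w"
      proof
        assume v: "v = w'" show ?thesis unfolding v by (rule kk[OF w w'(1,2)])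
      next
        assume v: "v = w' \<otimes> t" show ?thesis unfolding v
          by (rule comm_prod[OF w'(1) tc w(1) kk[OF w w'(1,2)] kt[OF w]])
      qed
      then show ?thesis by (rule sym)
    qed
    have ct: "v \<otimes> t = t \<otimes> v" if v: "v \<in> L" for v
    proof -
      obtain w' where w': "w' \<in> carrier G" "psi w' = lid k" "v = w' \<or> v = w' \<otimes> t" using decomp[OF v] by blast
      from w'(3) have "t \<otimes> v = v \<otimes> t"
      proof
        assume v: "v = w'" show ?thesis unfolding v by (rule sym, rule kt[OF w'(1,2)])
      next
        assume v: "v = w' \<otimes> t" show ?thesis unfolding v
          by (rule comm_prod[OF w'(1) tc tc kt[OF w'(1,2), symmetric] refl])
      qed
      then show ?thesis by (rule sym)
    qed
    have Lcomm: "u \<otimes> v = v \<otimes> u" if uvL: "u \<in> L" "v \<in> L" for u v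
    proof -
      obtain w where w: "w \<in> carrier G" "psi w = lid k" "u = w \<or> u = w \<otimes> t" using decomp[OF uvL(1)] by blast
      have vc: "v \<in> carrier G" using uvL L_def by auto
      from w(3) show ?thesis
      proof
        assume u: "u = w" show ?thesis unfolding u by (rule sym, rule cw[OF uvL(2) w(1,2)])
      next
        assume u: "u = w \<otimes> t" show ?thesis unfolding u
          by (rule sym, rule comm_prod[OF w(1) tc vc cw[OF uvL(2) w(1,2)] ct[OF uvL(2)]])
      qed
    qed
    show ?thesis
    proof (rule dd[OF L])
      show "derived_set G (carrier G) \<subseteq> L"
      proof (intro subsetI, elim UN_E singletonE)
        fix h1 h2 c assume h: "h1 \<in> carrier G" "h2 \<in> carrier G" and c: "c = h1 \<otimes> h2 \<otimes> inv h1 \<otimes> inv h2"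
        have "psi c = pcomm (psi h1) (psi h2)" using psi_comm[OF k h] c by simp
        moreover have "pcomm (psi h1) (psi h2) = lid k \<or> pcomm (psi h1) (psi h2) = z" using pc h P_def by blast
        moreover have "c \<in> carrier G" using c h by simp
        ultimately show "c \<in> L" using L_def by auto
      qed
      show "derived_set G L \<subseteq> center G"
      proof (intro subsetI, elim UN_E singletonE)
        fix u v c assume uv: "u \<in> L" "v \<in> L" and c: "c = u \<otimes> v \<otimes> inv u \<otimes> inv v"
        have uc: "u \<in> carrier G" "v \<in> carrier G" using uv L_def by auto
        have "c = \<one>" using c comm_commutator[OF uc Lcomm[OF uv]] by simp
        moreover have "\<one> \<in> center G" by (rule subgroup.one_closed[OF center_sub])
        ultimately show "c \<in> center G" by simp
      qed
    qed
  qed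
qed

end


lemma final_gen:
  fixes G :: "('a, 'b) monoid_scheme" (structure) and H :: "'a set"
  assumes grp: "group G" and fin: "finite (carrier G)" and H: "subgroup H G"
    and cyc: "cyclic_group (subgroup_generated G H)"
    and k: "card (rcosets\<^bsub>G\<^esub> H) \<in> {1,2,3,4}"
  shows "second_derived G \<subseteq> center G"
proof -
  interpret group G by (rule grp)
  have cg: "comm_group (subgroup_generated G H)"
    using group.cyclic_imp_abelian_group[OF group_subgroup_generated cyc] .
  have Hc: "a \<otimes> b = b \<otimes> a" if "a \<in> H" "b \<in> H" for a b
  proof -
    have ab: "a \<in> carrier (subgroup_generated G H)" "b \<in> carrier (subgroup_generated G H)"
      using that subgroup.carrier_subgroup_generated_subgroup[OF H] by auto
    have "a \<otimes>\<^bsub>subgroup_generated G H\<^esub> b = b \<otimes>\<^bsub>subgroup_generated G H\<^esub> a"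
      by (rule comm_monoid.m_comm[OF comm_group.axioms(1)[OF cg] ab])
    then show ?thesis by simp
  qed
  have "finite (rcosets H)"
    using rcosets_subset_PowG[OF H] fin by (meson finite_Pow_iff finite_subset)
  then obtain f where f: "bij_betw f {0..<card (rcosets H)} (rcosets H)"
    using ex_bij_betw_nat_finite by blast
  interpret cact G H "card (rcosets H)" f
    using H Hc f is_group by (simp add: cact_def cact_axioms_def)
  show ?thesis by (rule main[OF k])
qed

lemma cop_dvd: "coprime (a::nat) n \<Longrightarrow> a dvd n \<Longrightarrow> a = 1" by auto

lemma five: "\<not> (5::nat) dvd 2^a * 3^b"
proof
  assume d: "(5::nat) dvd 2^a * 3^b"
  have c53: "coprime (5::nat) 3" by (simp add: coprime_iff_gcd_eq_1 gcd_non_0_nat)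
  have c52: "coprime (5::nat) 2" by (simp add: coprime_iff_gcd_eq_1 gcd_non_0_nat)
  have x: "coprime (5::nat) (2^a)" using c52 by simp
  have y: "coprime (5::nat) (3^b)" using c53 by simp
  have "coprime (5::nat) (2^a * 3^b)" using x y by simp
  then have "(5::nat) = 1" using d cop_dvd by blast
  then show False by simp
qed

theorem proposition2p6:
  shows "(\<forall>G :: ('a, 'b) monoid_scheme.
            group G \<and> finite (carrier G) \<and> (\<exists>n::nat. order G = 2 ^ n) \<and>
            (\<exists>H. subgroup H G \<and> cyclic_group (subgroup_generated G H) \<and>
                 card (rcosets\<^bsub>G\<^esub> H) = 4)
          \<longrightarrow> second_derived G \<subseteq> center G)
       \<and> (\<forall>G :: ('a, 'b) monoid_scheme.
            group G \<and> finite (carrier G) \<and>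
            (\<exists>\<alpha> \<beta>::nat. order G = 2 ^ \<alpha> * 3 ^ \<beta>) \<and>
            (\<exists>H. subgroup H G \<and> cyclic_group (subgroup_generated G H) \<and>
                 card (rcosets\<^bsub>G\<^esub> H) < 6)
          \<longrightarrow> second_derived G \<subseteq> center G)"
proof (intro conjI allI impI)
  fix G :: "('a, 'b) monoid_scheme"
  assume "group G \<and> finite (carrier G) \<and> (\<exists>n::nat. order G = 2 ^ n) \<and>
            (\<exists>H. subgroup H G \<and> cyclic_group (subgroup_generated G H) \<and> card (rcosets\<^bsub>G\<^esub> H) = 4)"
  then obtain H where h: "group G" "finite (carrier G)" "subgroup H G"
    "cyclic_group (subgroup_generated G H)" "card (rcosets\<^bsub>G\<^esub> H) = 4" by blast
  then show "second_derived G \<subseteq> center G" by (intro final_gen) auto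
next
  fix G :: "('a, 'b) monoid_scheme"
  assume a: "group G \<and> finite (carrier G) \<and>
            (\<exists>\<alpha> \<beta>::nat. order G = 2 ^ \<alpha> * 3 ^ \<beta>) \<and>
            (\<exists>H. subgroup H G \<and> cyclic_group (subgroup_generated G H) \<and> card (rcosets\<^bsub>G\<^esub> H) < 6)"
  then obtain H \<alpha> \<beta> where grp: "group G" and fin: "finite (carrier G)" and o: "order G = 2 ^ \<alpha> * 3 ^ \<beta>"
    and H: "subgroup H G" "cyclic_group (subgroup_generated G H)" "card (rcosets\<^bsub>G\<^esub> H) < 6" by blast
  interpret group G by (rule grp)
  have finR: "finite (rcosets\<^bsub>G\<^esub> H)"
    using rcosets_subset_PowG[OF H(1)] fin by (meson finite_Pow_iff finite_subset)
  have "H #>\<^bsub>G\<^esub> \<one>\<^bsub>G\<^esub> \<in> rcosets\<^bsub>G\<^esub> H" using rcosetsI subgroup.subset[OF H(1)] one_closed by blast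
  then have "card (rcosets\<^bsub>G\<^esub> H) \<noteq> 0" using finR by auto
  moreover have "card (rcosets\<^bsub>G\<^esub> H) \<noteq> 5"
  proof
    assume "card (rcosets\<^bsub>G\<^esub> H) = 5"
    then have "5 * card H = order G" using lagrange[OF H(1)] by simp
    then have "(5::nat) dvd 2 ^ \<alpha> * 3 ^ \<beta>" unfolding o[symmetric] by (rule dvdI[OF sym])
    then show False using five by blast
  qed
  ultimately have "1 \<le> card (rcosets\<^bsub>G\<^esub> H) \<and> card (rcosets\<^bsub>G\<^esub> H) \<le> 4" using H(3) by linarith
  then have "card (rcosets\<^bsub>G\<^esub> H) \<in> {1,2,3,4}" by auto
  then show "second_derived G \<subseteq> center G" by (rule final_gen[OF grp fin H(1) H(2)])
qed

end
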